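(* Let $A=(a_{ij})_{i,j\in\{1,\dots,\theta\}}$ be an indecomposable generalized Cartan matrix of indefinite type, $Q=\bigoplus_i\mathbb Z\alpha_i$ its root lattice, $Q_+=\sum_i\mathbb N_0\alpha_i$, and $W$ its Weyl group. Then for every $\gamma\in Q_+\setminus\{0\}$ the set $W\gamma\cap Q_+$ is infinite.
   Context: $W$ is the subgroup of $\mathrm{GL}(Q)$ generated by the simple reflections $s_i(\alpha_j)=\alpha_j-a_{ij}\alpha_i$. Types (finite, affine, indefinite) of indecomposable generalized Cartan matrices are in the sense of Kac. *)

theory Defs
  imports Complex_Main
begin

text \<open>A theta x theta matrix is a function nat => nat => int, indices 0..theta-1.
  Elements of the root lattice Q = (+)_i Z alpha_i are coefficient functions
  nat => int vanishing outside {0..<theta}.\<close>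

definition gcm :: "nat \<Rightarrow> (nat \<Rightarrow> nat \<Rightarrow> int) \<Rightarrow> bool" where
  "gcm n A \<longleftrightarrow> (\<forall>i<n. A i i = 2) \<and>
     (\<forall>i<n. \<forall>j<n. i \<noteq> j \<longrightarrow> A i j \<le> 0) \<and>
     (\<forall>i<n. \<forall>j<n. A i j = 0 \<longleftrightarrow> A j i = 0)"

definition indecomposable :: "nat \<Rightarrow> (nat \<Rightarrow> nat \<Rightarrow> int) \<Rightarrow> bool" where
  "indecomposable n A \<longleftrightarrow> n \<ge> 1 \<and>
     \<not> (\<exists>I J. I \<noteq> {} \<and> J \<noteq> {} \<and> I \<inter> J = {} \<and> I \<union> J = {0..<n} \<and>
             (\<forall>i\<in>I. \<forall>j\<in>J. A i j = 0))"

text \<open>Kac, Infinite dimensional Lie algebras, Thm 4.3, case (Ind): there is u > 0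
  with Au < 0, and Av >= 0, v >= 0 imply v = 0 (real vectors).\<close>
definition indefinite_type :: "nat \<Rightarrow> (nat \<Rightarrow> nat \<Rightarrow> int) \<Rightarrow> bool" where
  "indefinite_type n A \<longleftrightarrow>
     (\<exists>u :: nat \<Rightarrow> real. (\<forall>i<n. u i > 0) \<and> (\<forall>i<n. (\<Sum>j<n. of_int (A i j) * u j) < 0)) \<and>
     (\<forall>v :: nat \<Rightarrow> real. (\<forall>i<n. (\<Sum>j<n. of_int (A i j) * v j) \<ge> 0) \<and> (\<forall>i<n. v i \<ge> 0)
        \<longrightarrow> (\<forall>i<n. v i = 0))"

definition root_lattice :: "nat \<Rightarrow> (nat \<Rightarrow> int) set" where
  "root_lattice n = {\<beta>. \<forall>i\<ge>n. \<beta> i = 0}"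

definition pos_root_lattice :: "nat \<Rightarrow> (nat \<Rightarrow> int) set" where
  "pos_root_lattice n = {\<beta> \<in> root_lattice n. \<forall>i. \<beta> i \<ge> 0}"

text \<open>Simple reflection: s_i(alpha_j) = alpha_j - a_ij alpha_i, extended linearly.\<close>
definition simple_refl :: "nat \<Rightarrow> (nat \<Rightarrow> nat \<Rightarrow> int) \<Rightarrow> nat \<Rightarrow> (nat \<Rightarrow> int) \<Rightarrow> (nat \<Rightarrow> int)" where
  "simple_refl n A i \<beta> = (\<lambda>k. if k = i then \<beta> k - (\<Sum>j<n. A i j * \<beta> j) else \<beta> k)"

text \<open>Weyl group: the group generated by the simple reflections (as maps on Q).
  Since a_ii = 2, each s_i is an involution, so the monoid generated is the group.\<close>
inductive_set weyl_group :: "nat \<Rightarrow> (nat \<Rightarrow> nat \<Rightarrow> int) \<Rightarrow> ((nat \<Rightarrow> int) \<Rightarrow> (nat \<Rightarrow> int)) set"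
  for n A where
  id: "id \<in> weyl_group n A"
| refl: "w \<in> weyl_group n A \<Longrightarrow> i < n \<Longrightarrow> simple_refl n A i \<circ> w \<in> weyl_group n A"

end

theory Submission
  imports Defs
begin

lemma refl_nonzero:
  assumes "A i i = 2" "i < n" "\<beta> \<noteq> (\<lambda>_. 0)"
  shows "simple_refl n A i \<beta> \<noteq> (\<lambda>_. 0)"
proof
  assume h: "simple_refl n A i \<beta> = (\<lambda>_. 0)"
  have z: "\<And>k. k \<noteq> i \<Longrightarrow> \<beta> k = 0"
  proof -
    fix k assume "k \<noteq> i"
    from fun_cong[OF h, of k] show "\<beta> k = 0" using \<open>k \<noteq> i\<close> by (simp add: simple_refl_def)
  qed
  have "(\<Sum>j<n. A i j * \<beta> j) = (\<Sum>j<n. if j = i then A i i * \<beta> i else 0)"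
    by (rule sum.cong) (auto simp: z)
  also have "\<dots> = 2 * \<beta> i" using assms by simp
  finally have s: "(\<Sum>j<n. A i j * \<beta> j) = 2 * \<beta> i" .
  from fun_cong[OF h, of i] have "\<beta> i - (\<Sum>j<n. A i j * \<beta> j) = 0" by (simp add: simple_refl_def)
  with s have "\<beta> i = 0" by simp
  with z have "\<beta> = (\<lambda>_. 0)" by (metis ext)
  with assms show False by simp
qed

lemma W_nonzero:
  assumes "w \<in> weyl_group n A" "gcm n A" "\<beta> \<noteq> (\<lambda>_. 0)"
  shows "w \<beta> \<noteq> (\<lambda>_. 0)"
  using assms(1)
proof induction
  case id then show ?case using assms by simp
next
  case (refl w i)
  have "A i i = 2" using assms(2) refl by (simp add: gcm_def)
  then show ?case using refl_nonzero[OF _ refl(2) refl(3)] by simp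
qed

lemma ht_refl:
  assumes "i < n"
  shows "(\<Sum>k<n. simple_refl n A i \<beta> k) = (\<Sum>k<n. \<beta> k) - (\<Sum>j<n. A i j * \<beta> j)"
proof -
  let ?c = "\<Sum>j<n. A i j * \<beta> j"
  have "(\<Sum>k<n. simple_refl n A i \<beta> k) = (\<Sum>k<n. \<beta> k - (if k = i then ?c else 0))"
    by (rule sum.cong) (auto simp: simple_refl_def)
  also have "\<dots> = (\<Sum>k<n. \<beta> k) - (\<Sum>k<n. if k = i then ?c else 0)"
    by (rule sum_subtractf)
  also have "\<dots> = (\<Sum>k<n. \<beta> k) - ?c" using assms by simp
  finally show ?thesis .
qed

theorem lemma3p5:
  fixes \<theta> :: nat and A :: "nat \<Rightarrow> nat \<Rightarrow> int" and \<gamma> :: "nat \<Rightarrow> int"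
  assumes "gcm \<theta> A" and "indecomposable \<theta> A" and "indefinite_type \<theta> A"
    and "\<gamma> \<in> pos_root_lattice \<theta>" and "\<gamma> \<noteq> (\<lambda>_. 0)"
  shows "infinite ((\<lambda>w. w \<gamma>) ` weyl_group \<theta> A \<inter> pos_root_lattice \<theta>)"
proof
  define S where "S = (\<lambda>w. w \<gamma>) ` weyl_group \<theta> A \<inter> pos_root_lattice \<theta>"
  define ht where "ht = (\<lambda>\<beta>::nat\<Rightarrow>int. \<Sum>k<\<theta>. \<beta> k)"
  assume fin: "finite ((\<lambda>w. w \<gamma>) ` weyl_group \<theta> A \<inter> pos_root_lattice \<theta>)"
  hence finS: "finite S" by (simp add: S_def)
  have "\<gamma> \<in> S" unfolding S_def using assms(4) weyl_group.id[of \<theta> A]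
    by (metis IntI id_apply image_eqI)
  hence ne: "ht ` S \<noteq> {}" by auto
  have "Max (ht ` S) \<in> ht ` S" using finS ne by (intro Max_in) auto
  then obtain \<beta> where bS: "\<beta> \<in> S" and bmax: "ht \<beta> = Max (ht ` S)" by auto
  have bge: "\<And>\<beta>'. \<beta>' \<in> S \<Longrightarrow> ht \<beta>' \<le> ht \<beta>" using finS bmax by simp
  from bS obtain w where w: "w \<in> weyl_group \<theta> A" "\<beta> = w \<gamma>" and bpos: "\<beta> \<in> pos_root_lattice \<theta>"
    unfolding S_def by auto
  have bnz: "\<beta> \<noteq> (\<lambda>_. 0)" using W_nonzero[OF w(1) assms(1) assms(5)] w(2) by simp
  have Ab: "(\<Sum>j<\<theta>. A i j * \<beta> j) \<ge> 0" if i: "i < \<theta>" for i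
  proof (rule ccontr)
    let ?c = "\<Sum>j<\<theta>. A i j * \<beta> j"
    assume "\<not> ?c \<ge> 0"
    hence c: "?c < 0" by simp
    have "simple_refl \<theta> A i \<beta> \<in> pos_root_lattice \<theta>"
      using bpos c i by (auto simp: pos_root_lattice_def root_lattice_def simple_refl_def)
        (smt (verit))
    moreover have "simple_refl \<theta> A i \<circ> w \<in> weyl_group \<theta> A" using w(1) i by (rule weyl_group.refl)
    ultimately have "simple_refl \<theta> A i \<beta> \<in> S" unfolding S_def using w(2)
      by (metis IntI comp_apply image_eqI)
    hence "ht (simple_refl \<theta> A i \<beta>) \<le> ht \<beta>" by (rule bge)
    moreover have "ht (simple_refl \<theta> A i \<beta>) = ht \<beta> - ?c" unfolding ht_def using ht_refl[OF i] .
    ultimately show False using c by simp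
  qed
  define v where "v = (\<lambda>j. real_of_int (\<beta> j))"
  have "\<forall>i<\<theta>. (\<Sum>j<\<theta>. of_int (A i j) * v j) \<ge> 0"
  proof (intro allI impI)
    fix i assume "i < \<theta>"
    have e: "(\<Sum>j<\<theta>. of_int (A i j) * v j) = real_of_int (\<Sum>j<\<theta>. A i j * \<beta> j)"
      by (simp add: v_def)
    have "0 \<le> real_of_int (\<Sum>j<\<theta>. A i j * \<beta> j)" using Ab[OF \<open>i < \<theta>\<close>] by (simp only: of_int_0_le_iff)
    thus "(\<Sum>j<\<theta>. of_int (A i j) * v j) \<ge> 0" by (simp only: e)
  qed
  moreover have "\<forall>i<\<theta>. v i \<ge> 0" using bpos by (simp add: v_def pos_root_lattice_def)
  ultimately have "\<forall>i<\<theta>. v i = 0" using assms(3) unfolding indefinite_type_def by blast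
  hence "\<beta> = (\<lambda>_. 0)" using bpos
  proof (intro ext)
    fix k show "\<beta> k = 0"
    proof (cases "k < \<theta>")
      case True then show ?thesis using \<open>\<forall>i<\<theta>. v i = 0\<close> by (simp add: v_def)
    next
      case False then show ?thesis using bpos by (simp add: pos_root_lattice_def root_lattice_def)
    qed
  qed
  with bnz show False by simp
qed

end
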